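(* Let $G=SL_2$ over $k=\overline{\mathbb F}_p$, $U$ the unipotent radical of the (negative) Borel subgroup, $r\ge1$, and $n$ a positive integer. Then the restriction of the Weyl module $V(np^r)$ to $U_r$ satisfies $V(np^r)|_{U_r}\cong k\oplus (kU_r)^{\oplus n}$.
   Context: $U_r$ is the $r$-th Frobenius kernel of $U$; its group algebra $kU_r=\operatorname{Dist}(U_r)$ is the divided power algebra with basis $x^{(i)}=x^i/i!$, $0\le i\le p^r-1$. For $\lambda\in\mathbb Z_{\ge0}=X(T)_+$, $V(\lambda)$ is the Weyl module of highest weight $\lambda$, which for $SL_2$ is the $\lambda$-th symmetric power of the natural $2$-dimensional module, of dimension $\lambda+1$. *)

theory Defs
  imports "Jordan_Normal_Form.Matrix" "HOL-Computational_Algebra.Polynomial"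
begin

(* A finite-dimensional kU_r-module of dimension d is encoded by the matrices
   (w.r.t. a fixed basis) by which the basis elements x^(i), 0 <= i < p^r, of
   kU_r = Dist(U_r) act.  Matrices act on column vectors. *)

(* Weyl module V(lam) = lam-th symmetric power of the natural module k^2 = span{x,y},
   basis e_a = x^a y^(lam-a), 0 <= a <= lam.  The negative unipotent
   u(t) = [[1,0],[t,1]] sends x |-> x + t y, y |-> y, hence
   u(t) e_a = sum_i t^i (a choose i) e_(a-i); the divided power x^(i) acts by the
   coefficient of t^i:  x^(i) e_a = (a choose i) e_(a-i). *)
definition weyl_act :: "nat \<Rightarrow> nat \<Rightarrow> 'a::field mat" where
  "weyl_act lam i = mat (lam + 1) (lam + 1)
     (\<lambda>(c, a). if c + i = a then of_nat (a choose i) else 0)"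

(* Left regular module kU_r, basis x^(j), 0 <= j < N = p^r, with
   x^(i) x^(j) = ((i+j) choose i) x^(i+j)  (zero if i+j >= N). *)
definition reg_act :: "nat \<Rightarrow> nat \<Rightarrow> 'a::field mat" where
  "reg_act N i = mat N N
     (\<lambda>(c, j). if c = i + j then of_nat (c choose i) else 0)"

definition triv_act :: "nat \<Rightarrow> 'a::field mat" where
  "triv_act i = mat 1 1 (\<lambda>_. if i = 0 then 1 else 0)"

definition dsum_act :: "(nat \<Rightarrow> 'a::field mat) \<Rightarrow> (nat \<Rightarrow> 'a mat) \<Rightarrow> nat \<Rightarrow> 'a mat" where
  "dsum_act A B i = four_block_mat (A i) (0\<^sub>m (dim_row (A i)) (dim_col (B i)))
                                   (0\<^sub>m (dim_row (B i)) (dim_col (A i))) (B i)"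

fun dpow_act :: "nat \<Rightarrow> nat \<Rightarrow> (nat \<Rightarrow> 'a::field mat) \<Rightarrow> nat \<Rightarrow> 'a mat" where
  "dpow_act 0 d A = (\<lambda>i. 0\<^sub>m 0 0)"
| "dpow_act (Suc n) d A = dsum_act A (dpow_act n d A)"

definition mod_iso :: "nat \<Rightarrow> nat \<Rightarrow> (nat \<Rightarrow> 'a::field mat) \<Rightarrow> (nat \<Rightarrow> 'a mat) \<Rightarrow> bool" where
  "mod_iso N d A B \<longleftrightarrow>
     (\<forall>i<N. A i \<in> carrier_mat d d \<and> B i \<in> carrier_mat d d) \<and>
     (\<exists>P \<in> carrier_mat d d. invertible_mat P \<and> (\<forall>i<N. P * A i = B i * P))"

end

theory Submission
  imports Defs "HOL-Computational_Algebra.Primes"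
begin


lemma choose_pr_zero:
  assumes "prime CHAR('a::field)" and "0 < m" and "m < CHAR('a) ^ r"
  shows "of_nat (CHAR('a) ^ r choose m) = (0::'a)"
proof -
  let ?N = "CHAR('a) ^ r"
  have "([:1,1:] :: 'a poly) ^ ?N = (1 + [:0,1:]) ^ ?N" by (simp add: one_pCons)
  also have "\<dots> = 1 ^ ?N + [:0,1:] ^ ?N"
    by (rule freshmans_dream') (use assms in auto)
  also have "\<dots> = 1 + monom 1 ?N" by (simp add: monom_altdef)
  finally have e: "([:1,1:] :: 'a poly) ^ ?N = 1 + monom 1 ?N" .
  have "coeff (([:1,1:] :: 'a poly) ^ ?N) m = of_nat (?N choose m)"
    using assms by (subst coeff_linear_poly_power) auto
  moreover have "coeff (1 + monom (1::'a) ?N) m = 0"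
    using assms by (auto simp: coeff_monom)
  ultimately show ?thesis using e by simp
qed

lemma choose_shift:
  assumes "prime CHAR('a::field)" and "i < CHAR('a) ^ r"
  shows "(of_nat ((a + CHAR('a) ^ r) choose i) :: 'a) = of_nat (a choose i)"
proof -
  let ?N = "CHAR('a) ^ r"
  have "(of_nat ((a + ?N) choose i) :: 'a) = (\<Sum>k\<le>i. of_nat (a choose k) * of_nat (?N choose (i - k)))"
    by (simp flip: vandermonde)
  also have "\<dots> = (\<Sum>k\<le>i. if k = i then of_nat (a choose i) else 0)"
  proof (rule sum.cong)
    fix k assume "k \<in> {..i}"
    then show "(of_nat (a choose k) :: 'a) * of_nat (?N choose (i - k)) = (if k = i then of_nat (a choose i) else 0)"
      using choose_pr_zero[of "i - k" r, OF assms(1)] assms(2) by auto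
  qed simp
  also have "\<dots> = of_nat (a choose i)" by simp
  finally show ?thesis .
qed

lemma choose_shift_mult:
  assumes "prime CHAR('a::field)" and "i < CHAR('a) ^ r"
  shows "(of_nat ((q * CHAR('a) ^ r + a) choose i) :: 'a) = of_nat (a choose i)"
proof (induction q)
  case (Suc q)
  have "Suc q * CHAR('a) ^ r + a = (q * CHAR('a) ^ r + a) + CHAR('a) ^ r" by simp
  then show ?case using choose_shift[OF assms, of "q * CHAR('a) ^ r + a"] Suc by (simp add: add_ac)
qed simp

lemma choose_pm1:
  assumes "prime CHAR('a::field)" and "j < CHAR('a) ^ r"
  shows "(of_nat ((CHAR('a) ^ r - 1) choose j) :: 'a) = (-1) ^ j"
  using assms(2)
proof (induction j)
  case (Suc j)
  let ?N = "CHAR('a) ^ r"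
  have N: "?N = Suc (?N - 1)" using Suc.prems by simp
  have "(?N choose (Suc j)) = ((?N - 1) choose j) + ((?N - 1) choose (Suc j))"
    by (subst N) simp
  hence "(of_nat ((?N - 1) choose j) :: 'a) + of_nat ((?N - 1) choose (Suc j)) = 0"
    using choose_pr_zero[of "Suc j" r, OF assms(1)] Suc.prems by (metis of_nat_add zero_less_Suc)
  then show ?case using Suc by (simp add: eq_neg_iff_add_eq_0 add.commute) 
qed simp



definition monP :: "nat \<Rightarrow> (nat \<Rightarrow> nat) \<Rightarrow> (nat \<Rightarrow> 'a::field) \<Rightarrow> 'a mat" where
  "monP d \<sigma> w = mat d d (\<lambda>(r,c). if c = \<sigma> r then 1 / w r else 0)"
definition monQ :: "nat \<Rightarrow> (nat \<Rightarrow> nat) \<Rightarrow> (nat \<Rightarrow> 'a::field) \<Rightarrow> 'a mat" where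
  "monQ d \<sigma> w = mat d d (\<lambda>(r,c). if r = \<sigma> c then w c else 0)"

locale perm_data =
  fixes d :: nat and \<sigma> \<tau> :: "nat \<Rightarrow> nat"
  assumes s: "\<And>s. s < d \<Longrightarrow> \<sigma> s < d" and t: "\<And>a. a < d \<Longrightarrow> \<tau> a < d"
    and ts: "\<And>s. s < d \<Longrightarrow> \<tau> (\<sigma> s) = s" and st: "\<And>a. a < d \<Longrightarrow> \<sigma> (\<tau> a) = a"
begin

lemma sigma_eq: "k < d \<Longrightarrow> c < d \<Longrightarrow> (c = \<sigma> k) = (k = \<tau> c)"
  using ts st by auto

lemma monP_inv:
  fixes w :: "nat \<Rightarrow> 'a::field"
  assumes w: "\<And>s. s < d \<Longrightarrow> w s \<noteq> 0"
  shows "monP d \<sigma> w \<in> carrier_mat d d" "invertible_mat (monP d \<sigma> w)"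
proof -
  show "monP d \<sigma> w \<in> carrier_mat d d" by (simp add: monP_def)
  have 1: "monP d \<sigma> w * monQ d \<sigma> w = 1\<^sub>m d"
  proof (rule eq_matI)
    fix r c assume rc: "r < dim_row (1\<^sub>m d :: 'a mat)" "c < dim_col (1\<^sub>m d :: 'a mat)"
    have "(monP d \<sigma> w * monQ d \<sigma> w) $$ (r, c) =
        (\<Sum>k<d. (if k = \<sigma> r then 1 / w r else 0) * (if k = \<sigma> c then w c else 0))"
      using rc by (simp add: monP_def monQ_def scalar_prod_def atLeast0LessThan)
    also have "\<dots> = (\<Sum>k<d. if k = \<sigma> r then (if r = c then 1 else 0) else 0)"
    proof (rule sum.cong)
      fix k assume "k \<in> {..<d}"
      then show "(if k = \<sigma> r then 1 / w r else 0) * (if k = \<sigma> c then w c else 0) =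
           (if k = \<sigma> r then (if r = c then 1 else 0) else (0::'a))"
        using rc w ts by auto (metis ts)
    qed simp
    also have "\<dots> = (1\<^sub>m d :: 'a mat) $$ (r, c)" using rc s by simp
    finally show "(monP d \<sigma> w * monQ d \<sigma> w) $$ (r, c) = (1\<^sub>m d :: 'a mat) $$ (r, c)" .
  qed (auto simp: monP_def monQ_def)
  have 2: "monQ d \<sigma> w * monP d \<sigma> w = 1\<^sub>m d"
  proof (rule eq_matI)
    fix r c assume rc: "r < dim_row (1\<^sub>m d :: 'a mat)" "c < dim_col (1\<^sub>m d :: 'a mat)"
    have "(monQ d \<sigma> w * monP d \<sigma> w) $$ (r, c) =
        (\<Sum>k<d. (if r = \<sigma> k then w k else 0) * (if c = \<sigma> k then 1 / w k else 0))"
      using rc by (simp add: monP_def monQ_def scalar_prod_def atLeast0LessThan)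
    also have "\<dots> = (\<Sum>k<d. if k = \<tau> r then (if r = c then 1 else 0) else 0)"
    proof (rule sum.cong)
      fix k assume "k \<in> {..<d}"
      then show "(if r = \<sigma> k then w k else 0) * (if c = \<sigma> k then 1 / w k else 0) =
           (if k = \<tau> r then (if r = c then 1 else 0) else (0::'a))"
        using rc w sigma_eq[of k r] sigma_eq[of k c] by auto
    qed simp
    also have "\<dots> = (1\<^sub>m d :: 'a mat) $$ (r, c)" using rc t by simp
    finally show "(monQ d \<sigma> w * monP d \<sigma> w) $$ (r, c) = (1\<^sub>m d :: 'a mat) $$ (r, c)" .
  qed (auto simp: monP_def monQ_def)
  show "invertible_mat (monP d \<sigma> w)"
    unfolding invertible_mat_def inverts_mat_def using 1 2
    by (auto simp: monP_def monQ_def square_mat.simps)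
qed

lemma monP_intertw:
  fixes w :: "nat \<Rightarrow> 'a::field" and A B :: "'a mat"
  assumes w: "\<And>s. s < d \<Longrightarrow> w s \<noteq> 0"
    and A: "A \<in> carrier_mat d d" and B: "B \<in> carrier_mat d d"
    and cond: "\<And>s c. s < d \<Longrightarrow> c < d \<Longrightarrow> w s * B $$ (s, c) = A $$ (\<sigma> s, \<sigma> c) * w c"
  shows "monP d \<sigma> w * A = B * monP d \<sigma> w"
proof (rule eq_matI)
  fix r c assume rc: "r < dim_row (B * monP d \<sigma> w)" "c < dim_col (B * monP d \<sigma> w)"
  hence rc': "r < d" "c < d" using B by (auto simp: monP_def)
  have "(monP d \<sigma> w * A) $$ (r, c) = (\<Sum>k<d. (if k = \<sigma> r then 1 / w r else 0) * A $$ (k, c))"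
    using rc' A by (simp add: monP_def scalar_prod_def atLeast0LessThan)
  also have "\<dots> = (\<Sum>k<d. if k = \<sigma> r then A $$ (\<sigma> r, c) / w r else 0)"
    by (rule sum.cong) auto
  also have "\<dots> = A $$ (\<sigma> r, c) / w r" using s rc' by simp
  also have "\<dots> = B $$ (r, \<tau> c) / w (\<tau> c)"
    using cond[of r "\<tau> c"] rc' w[of r] w[of "\<tau> c"] t st
    by (simp add: field_simps)
  also have "\<dots> = (\<Sum>k<d. if k = \<tau> c then B $$ (r, \<tau> c) / w (\<tau> c) else 0)" using t rc' by simp
  also have "\<dots> = (\<Sum>k<d. B $$ (r, k) * (if c = \<sigma> k then 1 / w k else 0))"
    by (rule sum.cong) (use sigma_eq rc' in auto)
  also have "\<dots> = (B * monP d \<sigma> w) $$ (r, c)"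
    using rc' B by (simp add: monP_def scalar_prod_def atLeast0LessThan)
  finally show "(monP d \<sigma> w * A) $$ (r, c) = (B * monP d \<sigma> w) $$ (r, c)" .
qed (use A B in \<open>auto simp: monP_def\<close>)


end


lemma divmod_help: "j < (N::nat) \<Longrightarrow> (q * N + j) div N = q \<and> (q * N + j) mod N = j"
  by simp

lemma dpow_reg:
  assumes N: "N > 0"
  shows "(dpow_act n d (reg_act N) i :: 'a::field mat) = mat (n*N) (n*N)
     (\<lambda>(x,y). if x div N = y div N \<and> x mod N = i + y mod N then of_nat (x mod N choose i) else 0)"
proof (induction n)
  case 0
  then show ?case by (auto intro!: eq_matI)
next
  case (Suc n)
  have dr: "dim_row (dpow_act n d (reg_act N) i :: 'a mat) = n*N" "dim_col (dpow_act n d (reg_act N) i :: 'a mat) = n*N"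
    by (simp_all add: Suc.IH)
  have rd: "dim_row (reg_act N i :: 'a mat) = N" "dim_col (reg_act N i :: 'a mat) = N"
    by (simp_all add: reg_act_def)
  show ?case
  proof (rule eq_matI)
    fix x y assume xy: "x < dim_row (mat (Suc n * N) (Suc n * N)
     (\<lambda>(x,y). if x div N = y div N \<and> x mod N = i + y mod N then of_nat (x mod N choose i) else (0::'a)))"
      "y < dim_col (mat (Suc n * N) (Suc n * N)
     (\<lambda>(x,y). if x div N = y div N \<and> x mod N = i + y mod N then of_nat (x mod N choose i) else (0::'a)))"
    hence xy': "x < N + n * N" "y < N + n * N" by auto
    show "dpow_act (Suc n) d (reg_act N) i $$ (x, y) = mat (Suc n * N) (Suc n * N)
     (\<lambda>(x,y). if x div N = y div N \<and> x mod N = i + y mod N then of_nat (x mod N choose i) else (0::'a)) $$ (x, y)"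
    proof (cases "x < N")
      case True
      then show ?thesis using xy' N
        by (auto simp: dsum_act_def Suc.IH reg_act_def le_div_geq)
    next
      case False
      then show ?thesis using xy' N
        by (auto simp: dsum_act_def Suc.IH reg_act_def le_div_geq le_mod_geq)
    qed
  qed (simp_all add: dsum_act_def dr rd)
qed



lemma lin1: "(a::nat) + N \<le> b \<Longrightarrow> j < N \<Longrightarrow> j' < N \<Longrightarrow> a + (N - 1 - j) + i = b + (N - 1 - j') \<Longrightarrow> N - 1 - j' < i"
  by arith
lemma lin0: "j < N \<Longrightarrow> j' < N \<Longrightarrow> (a::nat) + (N - 1 - j) + i = a + (N - 1 - j') \<Longrightarrow> j = i + j'"
  by arith
lemma lin2: "(b::nat) + N \<le> a \<Longrightarrow> j < N \<Longrightarrow> j' < N \<Longrightarrow> i < N \<Longrightarrow> a + (N - 1 - j) + i = b + (N - 1 - j') \<Longrightarrow> False"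
  by arith

lemma arith_key:
  fixes N q q' j j' i :: nat
  assumes "j < N" "j' < N" "i < N" "q * N + (N - 1 - j) + i = q' * N + (N - 1 - j')"
  shows "(q = q' \<and> j = i + j') \<or> N - 1 - j' < i"
proof (cases q q' rule: linorder_cases)
  case less
  hence "q * N + N \<le> q' * N" using mult_le_mono1[of "Suc q" q' N] by simp
  then show ?thesis using assms lin1 by blast
next
  case equal
  then show ?thesis using assms lin0[of j N j' "q*N" i] by simp
next
  case greater
  hence "q' * N + N \<le> q * N" using mult_le_mono1[of "Suc q'" q N] by simp
  then show ?thesis using assms lin2 by blast
qed

lemma decomp:
  assumes "0 < s" "s < n * N + 1" "0 < (N::nat)"
  shows "\<exists>q j. s = Suc (q * N + j) \<and> q < n \<and> j < N"
proof (intro exI conjI)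
  show "s = Suc ((s - 1) div N * N + (s - 1) mod N)" using assms by simp
  show "(s - 1) div N < n" using assms by (simp add: less_mult_imp_div_less)
  show "(s - 1) mod N < N" using assms by simp
qed

lemma lt_block: "q < n \<Longrightarrow> j < N \<Longrightarrow> q * N + j < n * (N::nat)"
proof -
  assume "q < n" "j < N"
  hence "Suc q * N \<le> n * N" by (intro mult_le_mono1) simp
  then show ?thesis using \<open>j < N\<close> by simp
qed


lemma B_entry:
  assumes N: "N > 0" and s: "s < n*N+1" and c: "c < n*N+1"
  shows "(dsum_act triv_act (dpow_act n N (reg_act N)) i :: 'a::field mat) $$ (s,c) =
    (if s = 0 then (if c = 0 then (if i = 0 then 1 else 0) else 0)
     else if c = 0 then 0
     else (if (s-1) div N = (c-1) div N \<and> (s-1) mod N = i + (c-1) mod N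
           then of_nat ((s-1) mod N choose i) else 0))"
  using s c by (simp add: dsum_act_def dpow_reg[OF N] triv_act_def)

lemma B_carrier:
  assumes N: "N > 0"
  shows "(dsum_act triv_act (dpow_act n N (reg_act N)) i :: 'a::field mat) \<in> carrier_mat (n*N+1) (n*N+1)"
  unfolding carrier_mat_def by (simp add: dsum_act_def dpow_reg[OF N] triv_act_def)

theorem proposition7p2:
  fixes p r n :: nat
  assumes "prime p" and "CHAR('a::field) = p"
    and "\<forall>q :: 'a poly. degree q \<ge> 1 \<longrightarrow> (\<exists>x. poly q x = 0)"
    and "r \<ge> 1" and "n \<ge> 1"
  shows "mod_iso (p ^ r) (n * p ^ r + 1)
           (weyl_act (n * p ^ r) :: nat \<Rightarrow> 'a mat)
           (dsum_act triv_act (dpow_act n (p ^ r) (reg_act (p ^ r))))"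
proof -
  define N where "N = p ^ r"
  have charN: "CHAR('a) ^ r = N" using assms(2) N_def by simp
  have cp: "prime CHAR('a)" using assms by simp
  have Npos: "N > 0" using prime_gt_0_nat[OF assms(1)] N_def by simp
  have csm: "\<And>q a i. i < N \<Longrightarrow> (of_nat ((q*N + a) choose i)::'a) = of_nat (a choose i)"
    using choose_shift_mult[OF cp] charN by metis
  have cpm: "\<And>j. j < N \<Longrightarrow> (of_nat ((N - 1) choose j)::'a) = (-1) ^ j"
    using choose_pm1[OF cp] charN by metis
  define d where "d = n*N+1"
  define \<sigma> where "\<sigma> = (\<lambda>s. if s = 0 then n*N else ((s-1) div N)*N + (N - 1 - (s-1) mod N))"
  define \<tau> where "\<tau> = (\<lambda>a. if a = n*N then 0 else Suc ((a div N)*N + (N - 1 - a mod N)))"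
  define w :: "nat \<Rightarrow> 'a" where "w = (\<lambda>s. if s = 0 then 1 else of_nat ((N-1) choose ((s-1) mod N)))"
  have \<sigma>S: "\<And>q j. j < N \<Longrightarrow> \<sigma> (Suc (q*N+j)) = q*N + (N-1-j)" by (simp add: \<sigma>_def)
  have wS: "\<And>q j. j < N \<Longrightarrow> w (Suc (q*N+j)) = of_nat ((N-1) choose j)" by (simp add: w_def)
  have dec: "\<And>s. 0 < s \<Longrightarrow> s < d \<Longrightarrow> \<exists>q j. s = Suc (q * N + j) \<and> q < n \<and> j < N"
    using decomp Npos d_def by blast
  have dec2: "\<And>a. a < n*N \<Longrightarrow> \<exists>q j. a = q * N + j \<and> q < n \<and> j < N"
  proof -
    fix a assume "a < n*N"
    then obtain q j where "Suc a = Suc (q*N+j)" "q<n" "j<N" using decomp[of "Suc a" n N] Npos by auto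
    then show "\<exists>q j. a = q * N + j \<and> q < n \<and> j < N" by auto
  qed
  have lb: "\<And>q j. q < n \<Longrightarrow> j < N \<Longrightarrow> q*N + (N-1-j) < n*N"
  proof -
    fix q j :: nat assume "q < n" "j < N"
    moreover have "N - 1 - j < N" using Npos by simp
    ultimately show "q*N + (N-1-j) < n*N" using lt_block[of q n "N-1-j" N] by blast
  qed
  have tauG: "\<And>q k. q < n \<Longrightarrow> k < N \<Longrightarrow> \<tau> (q*N+k) = Suc (q*N + (N-1-k))"
  proof -
    fix q k assume "q < n" "k < N"
    hence "q*N+k < n*N" by (rule lt_block)
    thus "\<tau> (q*N+k) = Suc (q*N + (N-1-k))" using \<open>k < N\<close> by (simp add: \<tau>_def)
  qed
  interpret perm_data d \<sigma> \<tau>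
  proof
    fix s assume s: "s < d"
    show "\<sigma> s < d"
    proof (cases "s = 0")
      case True then show ?thesis by (simp add: \<sigma>_def d_def)
    next
      case False
      then obtain q j where "s = Suc (q * N + j)" "q < n" "j < N" using dec s by blast
      then show ?thesis using \<sigma>S lb[of q j] d_def by simp
    qed
    show "\<tau> (\<sigma> s) = s"
    proof (cases "s = 0")
      case True then show ?thesis by (simp add: \<sigma>_def \<tau>_def)
    next
      case False
      then obtain q j where qj: "s = Suc (q * N + j)" "q < n" "j < N" using dec s by blast
      have k: "N - 1 - j < N" using Npos by simp
      have e: "\<sigma> s = q*N + (N-1-j)" using \<sigma>S qj by simp
      have "\<tau> (\<sigma> s) = Suc (q*N + (N-1-(N-1-j)))" unfolding e by (rule tauG[OF qj(2) k])
      then show ?thesis using qj by simp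
    qed
  next
    fix a assume a: "a < d"
    show "\<tau> a < d"
    proof (cases "a = n*N")
      case True then show ?thesis by (simp add: \<tau>_def d_def)
    next
      case False
      have "a < n*N" using False a d_def by simp
      then obtain q j where qj: "a = q * N + j" "q < n" "j < N" using dec2 by blast
      then show ?thesis using lb[of q j] by (simp add: \<tau>_def d_def)
    qed
    show "\<sigma> (\<tau> a) = a"
    proof (cases "a = n*N")
      case True then show ?thesis by (simp add: \<sigma>_def \<tau>_def)
    next
      case False
      have "a < n*N" using False a d_def by simp
      then obtain q j where qj: "a = q * N + j" "q < n" "j < N" using dec2 by blast
      have k: "N - 1 - j < N" using Npos by simp
      have e: "\<tau> a = Suc (q*N + (N-1-j))" using tauG qj by simp
      have "\<sigma> (\<tau> a) = q*N + (N-1-(N-1-j))" unfolding e by (rule \<sigma>S[OF k])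
      then show ?thesis using qj by simp
    qed
  qed
  have wnz: "\<And>s. s < d \<Longrightarrow> w s \<noteq> 0"
  proof -
    fix s assume s: "s < d"
    show "w s \<noteq> 0"
    proof (cases "s = 0")
      case True then show ?thesis by (simp add: w_def)
    next
      case False
      then obtain q j where "s = Suc (q * N + j)" "q < n" "j < N" using dec s by blast
      then show ?thesis using wS cpm by simp
    qed
  qed
  have Acar: "\<And>i. (weyl_act (n*N) i :: 'a mat) \<in> carrier_mat d d" by (simp add: weyl_act_def d_def)
  have Bcar: "\<And>i. (dsum_act triv_act (dpow_act n N (reg_act N)) i :: 'a mat) \<in> carrier_mat d d"
    using B_carrier[OF Npos] d_def by simp
  have Aent: "\<And>i a b. a < d \<Longrightarrow> b < d \<Longrightarrow> (weyl_act (n*N) i :: 'a mat) $$ (a,b) = (if a + i = b then of_nat (b choose i) else 0)"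
    by (simp add: weyl_act_def d_def)
  have cond: "w s * (dsum_act triv_act (dpow_act n N (reg_act N)) i :: 'a mat) $$ (s, c) = (weyl_act (n*N) i :: 'a mat) $$ (\<sigma> s, \<sigma> c) * w c"
    if i: "i < N" and s: "s < d" and c: "c < d" for i s c
  proof -
    let ?B = "(dsum_act triv_act (dpow_act n N (reg_act N)) i :: 'a mat)"
    let ?A = "(weyl_act (n*N) i :: 'a mat)"
    have sd: "s < n*N+1" "c < n*N+1" using s c d_def by auto
    show ?thesis
    proof (cases "s = 0")
      case s0: True
      show ?thesis
      proof (cases "c = 0")
        case c0: True
        have hB: "?B $$ (s,c) = (if i = 0 then 1 else 0)" using B_entry[where i=i, OF Npos sd] s0 c0 by simp
        have hA: "?A $$ (\<sigma> s, \<sigma> c) = (if n*N + i = n*N then of_nat (n*N choose i) else 0)"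
          using Aent[of "n*N" "n*N" i] s0 c0 d_def by (simp add: \<sigma>_def)
        show ?thesis using hA hB s0 c0 by (simp add: w_def)
      next
        case False
        then obtain q' j' where qj': "c = Suc (q' * N + j')" "q' < n" "j' < N" using dec c by blast
        have hB: "?B $$ (s,c) = 0" using B_entry[where i=i, OF Npos sd] s0 False by simp
        have lt: "q'*N + (N-1-j') < n*N" using lb qj' by blast
        have hc: "\<sigma> c = q'*N + (N-1-j')" using \<sigma>S qj' by simp
        have hA: "?A $$ (\<sigma> s, \<sigma> c) = (if n*N + i = q'*N + (N-1-j') then of_nat ((q'*N + (N-1-j')) choose i) else 0)"
          unfolding hc using Aent[of "n*N" "q'*N + (N-1-j')" i] s0 d_def lt by (simp add: \<sigma>_def)
        have "n*N + i \<noteq> q'*N + (N-1-j')" using lt by linarith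
        then show ?thesis using hA hB by simp
      qed
    next
      case False
      then obtain q j where qj: "s = Suc (q * N + j)" "q < n" "j < N" using dec s by blast
      have lts: "q*N + (N-1-j) < n*N" using lb qj by blast
      have hs: "\<sigma> s = q*N + (N-1-j)" using \<sigma>S qj by simp
      have ws: "w s = of_nat ((N-1) choose j)" using wS qj by simp
      show ?thesis
      proof (cases "c = 0")
        case c0: True
        have hB: "?B $$ (s,c) = 0" using B_entry[where i=i, OF Npos sd] False c0 by simp
        have hA: "?A $$ (\<sigma> s, \<sigma> c) = (if q*N + (N-1-j) + i = n*N then of_nat ((n*N) choose i) else 0)"
          unfolding hs using Aent[of "q*N + (N-1-j)" "n*N" i] c0 d_def lts by (simp add: \<sigma>_def)
        have "(if q*N + (N-1-j) + i = n*N then of_nat ((n*N) choose i) else 0) = (0::'a)"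
        proof (cases "q*N + (N-1-j) + i = n*N")
          case True
          hence "i \<noteq> 0" using lts by auto
          have "(of_nat ((n*N + 0) choose i) :: 'a) = of_nat (0 choose i)" using csm i by blast
          moreover have "(0::nat) choose i = 0" using \<open>i \<noteq> 0\<close> by simp
          ultimately show ?thesis using True by simp
        qed simp
        then show ?thesis using hA hB by simp
      next
        case False
        then obtain q' j' where qj': "c = Suc (q' * N + j')" "q' < n" "j' < N" using dec c by blast
        have dm: "(s-1) div N = q" "(s-1) mod N = j" "(c-1) div N = q'" "(c-1) mod N = j'"
          using qj qj' by simp_all
        have hB: "?B $$ (s,c) = (if q = q' \<and> j = i + j' then of_nat (j choose i) else 0)"
          using B_entry[where i=i, OF Npos sd] \<open>s \<noteq> 0\<close> False by (simp only: dm) simp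
        have lt: "q'*N + (N-1-j') < n*N" using lb qj' by blast
        have hc: "\<sigma> c = q'*N + (N-1-j')" using \<sigma>S qj' by simp
        have wc: "w c = of_nat ((N-1) choose j')" using wS qj' by simp
        have hA: "?A $$ (\<sigma> s, \<sigma> c) = (if q*N + (N-1-j) + i = q'*N + (N-1-j') then of_nat ((q'*N + (N-1-j')) choose i) else 0)"
          unfolding hs hc using Aent[of "q*N + (N-1-j)" "q'*N + (N-1-j')" i] d_def lt lts by simp
        have cs: "(of_nat ((q'*N + (N-1-j')) choose i) :: 'a) = of_nat ((N-1-j') choose i)" using csm i by blast
        show ?thesis
        proof (cases "q = q' \<and> j = i + j'")
          case True
          have le: "i + j' \<le> N - 1" using True qj by simp
          have eq: "q*N + (N-1-j) + i = q'*N + (N-1-j')" using True le by simp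
          have "((N-1) choose (i+j')) * ((i+j') choose j') = ((N-1) choose j') * ((N-1-j') choose i)"
            using choose_mult[of j' "i+j'" "N-1"] le by simp
          moreover have "(i+j') choose j' = (i+j') choose i"
            using binomial_symmetric[of j' "i+j'"] by simp
          ultimately have "(of_nat ((N-1) choose j) :: 'a) * of_nat (j choose i) = of_nat ((N-1-j') choose i) * of_nat ((N-1) choose j')"
            using True by (metis of_nat_mult mult.commute)
          then show ?thesis using hA hB ws wc cs eq True by simp
        next
          case F: False
          have "(if q*N + (N-1-j) + i = q'*N + (N-1-j') then of_nat ((q'*N + (N-1-j')) choose i) else 0) = (0::'a)"
          proof (cases "q*N + (N-1-j) + i = q'*N + (N-1-j')")
            case True
            hence "N - 1 - j' < i" using arith_key[OF qj(3) qj'(3) i True] F by blast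
            hence "(N - 1 - j') choose i = 0" by (rule binomial_eq_0)
            hence "(of_nat ((N - 1 - j') choose i) :: 'a) = 0" by (simp del: binomial_eq_0_iff)
            then show ?thesis using cs True by simp
          qed simp
          then show ?thesis using hA hB F by simp
        qed
      qed
    qed
  qed
  show ?thesis
    unfolding mod_iso_def N_def[symmetric]
  proof (intro conjI allI impI bexI[of _ "monP d \<sigma> w"])
    fix i assume "i < N"
    show "(weyl_act (n*N) i :: 'a mat) \<in> carrier_mat (n*N+1) (n*N+1)" using Acar d_def by simp
    show "(dsum_act triv_act (dpow_act n N (reg_act N)) i :: 'a mat) \<in> carrier_mat (n*N+1) (n*N+1)" using Bcar d_def by simp
  next
    show "invertible_mat (monP d \<sigma> w)" using monP_inv wnz by blast
    show "monP d \<sigma> w \<in> carrier_mat (n*N+1) (n*N+1)" using monP_inv wnz d_def by blast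
  next
    fix i assume iN: "i < N"
    show "monP d \<sigma> w * weyl_act (n*N) i = dsum_act triv_act (dpow_act n N (reg_act N)) i * monP d \<sigma> w"
      by (rule monP_intertw[OF wnz Acar[of i] Bcar[of i] cond[OF iN]])
  qed
qed

end
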